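(* Let $X,Y$ be real normed linear spaces, $Z=X\oplus_\infty Y$ and $z=(x,y)\in Z\setminus\{\theta\}$. Then: (i) If $\|x\|>\|y\|$ and $x$ is $\varepsilon_x$-smooth for some $\varepsilon_x\in[0,2)$, then $z$ is $\varepsilon_x$-smooth. (ii) If $\|x\|<\|y\|$ and $y$ is $\varepsilon_y$-smooth for some $\varepsilon_y\in[0,2)$, then $z$ is $\varepsilon_y$-smooth. (iii) If $\|x\|=\|y\|$, then $z$ is not $\varepsilon$-smooth for any $\varepsilon\in[0,2)$.
   Context: $X\oplus_\infty Y$ is $X\times Y$ with norm $\max\{\|x\|,\|y\|\}$. For a normed space $W$ and $w\neq\theta$, $J(w)=\{\phi\in S_{W^*}:\phi(w)=\|w\|\}$, and $w$ is $\delta$-smooth if $\sup_{\phi,\psi\in J(w)}\|\phi-\psi\|\le\delta$; "approximately smooth" means $\delta$-smooth for some $\delta\in[0,2)$. *)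

theory Defs
  imports "HOL-Analysis.Analysis"
begin

definition is_dual_functional :: "('v::real_vector \<Rightarrow> real) \<Rightarrow> ('v \<Rightarrow> real) \<Rightarrow> bool" where
  "is_dual_functional N f \<longleftrightarrow> linear f \<and> (\<exists>K. \<forall>v. \<bar>f v\<bar> \<le> K * N v)"

definition dual_norm :: "('v::real_vector \<Rightarrow> real) \<Rightarrow> ('v \<Rightarrow> real) \<Rightarrow> real" where
  "dual_norm N f = Sup {\<bar>f v\<bar> | v. N v \<le> 1}"

definition supp_functionals :: "('v::real_vector \<Rightarrow> real) \<Rightarrow> 'v \<Rightarrow> ('v \<Rightarrow> real) set" where
  "supp_functionals N w = {f. is_dual_functional N f \<and> dual_norm N f = 1 \<and> f w = N w}"

definition delta_smooth :: "('v::real_vector \<Rightarrow> real) \<Rightarrow> real \<Rightarrow> 'v \<Rightarrow> bool" where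
  "delta_smooth N \<delta> w \<longleftrightarrow> w \<noteq> 0 \<and>
     (\<forall>f\<in>supp_functionals N w. \<forall>g\<in>supp_functionals N w. dual_norm N (\<lambda>v. f v - g v) \<le> \<delta>)"

definition inf_sum_norm :: "('a::real_normed_vector \<times> 'b::real_normed_vector) \<Rightarrow> real" where
  "inf_sum_norm z = max (norm (fst z)) (norm (snd z))"

end

theory Submission
  imports Defs
begin


definition sublin :: "('v::real_vector \<Rightarrow> real) \<Rightarrow> bool" where
  "sublin q \<longleftrightarrow> (\<forall>u v. q (u + v) \<le> q u + q v) \<and> (\<forall>c v. c > 0 \<longrightarrow> q (c *\<^sub>R v) = c * q v)"

lemma sublin_add: "sublin q \<Longrightarrow> q (u + v) \<le> q u + q v"
  unfolding sublin_def by blast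

lemma sublin_pos: "sublin q \<Longrightarrow> c > 0 \<Longrightarrow> q (c *\<^sub>R v) = c * q v"
  unfolding sublin_def by blast

lemma sublin_0: assumes "sublin q" shows "q 0 = 0"
proof -
  have "q ((2::real) *\<^sub>R 0) = 2 * q 0" by (rule sublin_pos[OF assms]) simp
  then show ?thesis by simp
qed

lemma sublin_nonneg_scale: "sublin q \<Longrightarrow> t \<ge> 0 \<Longrightarrow> q (t *\<^sub>R v) = t * q v"
  by (cases "t = 0") (auto simp: sublin_0 sublin_pos)

lemma sublin_neg: assumes "sublin q" shows "- q (- v) \<le> q v"
proof -
  have "q (v + - v) \<le> q v + q (- v)" by (rule sublin_add[OF assms])
  then show ?thesis using sublin_0[OF assms] by simp
qed

lemma sublin_norm: "sublin (norm :: 'v::real_normed_vector \<Rightarrow> real)"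
  unfolding sublin_def by (auto simp: norm_triangle_ineq)

definition Rop :: "('v::real_vector \<Rightarrow> real) \<Rightarrow> 'v \<Rightarrow> 'v \<Rightarrow> real" where
  "Rop q a v = Inf ((\<lambda>t. q (v + t *\<^sub>R a) - t * q a) ` {0..})"

lemma Rop_lb: assumes "sublin q" "t \<ge> 0" shows "- q (- v) \<le> q (v + t *\<^sub>R a) - t * q a"
proof -
  have "q ((v + t *\<^sub>R a) + - v) \<le> q (v + t *\<^sub>R a) + q (- v)" by (rule sublin_add[OF assms(1)])
  then have "q (t *\<^sub>R a) \<le> q (v + t *\<^sub>R a) + q (- v)" by simp
  then show ?thesis using sublin_nonneg_scale[OF assms] by simp
qed

lemma Rop_le: assumes "sublin q" "t \<ge> 0" shows "Rop q a v \<le> q (v + t *\<^sub>R a) - t * q a"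
  unfolding Rop_def
proof (rule cInf_lower)
  show "q (v + t *\<^sub>R a) - t * q a \<in> (\<lambda>t. q (v + t *\<^sub>R a) - t * q a) ` {0..}" using assms by auto
  show "bdd_below ((\<lambda>t. q (v + t *\<^sub>R a) - t * q a) ` {0..})"
    unfolding bdd_below_def using Rop_lb[OF assms(1)] by fastforce
qed

lemma Rop_ge: assumes "\<And>t. t \<ge> 0 \<Longrightarrow> c \<le> q (v + t *\<^sub>R a) - t * q a" shows "c \<le> Rop q a v"
  unfolding Rop_def by (rule cInf_greatest) (use assms in auto)

lemma Rop_self: "sublin q \<Longrightarrow> Rop q a v \<le> q v"
  using Rop_le[of q 0 a v] by simp

lemma Rop_neg: "sublin q \<Longrightarrow> Rop q a (- a) \<le> - q a"
  using Rop_le[of q 1 a "-a"] sublin_0[of q] by simp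

lemma Rop_scale_le: assumes "sublin q" "c > 0" shows "Rop q a (c *\<^sub>R v) \<le> c * Rop q a v"
proof -
  have "Rop q a (c *\<^sub>R v) / c \<le> Rop q a v"
  proof (rule Rop_ge)
    fix t :: real assume t: "t \<ge> 0"
    have "Rop q a (c *\<^sub>R v) \<le> q (c *\<^sub>R v + (c * t) *\<^sub>R a) - (c * t) * q a"
      using Rop_le[OF assms(1)] t assms(2) by simp
    also have "c *\<^sub>R v + (c * t) *\<^sub>R a = c *\<^sub>R (v + t *\<^sub>R a)" by (simp add: scaleR_add_right)
    also have "q (c *\<^sub>R (v + t *\<^sub>R a)) = c * q (v + t *\<^sub>R a)" using sublin_pos[OF assms] .
    finally have "Rop q a (c *\<^sub>R v) \<le> c * (q (v + t *\<^sub>R a) - t * q a)"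
      by (simp add: algebra_simps)
    then show "Rop q a (c *\<^sub>R v) / c \<le> q (v + t *\<^sub>R a) - t * q a"
      using assms(2) by (simp add: pos_divide_le_eq mult.commute)
  qed
  then show ?thesis using assms(2) by (simp add: divide_le_eq mult.commute)
qed

lemma Rop_sublin: assumes "sublin q" shows "sublin (Rop q a)"
  unfolding sublin_def
proof (intro conjI allI impI)
  fix u v
  show "Rop q a (u + v) \<le> Rop q a u + Rop q a v"
  proof -
    have "Rop q a (u + v) - Rop q a v \<le> Rop q a u"
    proof (rule Rop_ge)
      fix s :: real assume s: "s \<ge> 0"
      have "Rop q a (u + v) - (q (u + s *\<^sub>R a) - s * q a) \<le> Rop q a v"
      proof (rule Rop_ge)
        fix t :: real assume t: "t \<ge> 0"
        have "Rop q a (u + v) \<le> q ((u + v) + (s + t) *\<^sub>R a) - (s + t) * q a"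
          using Rop_le[OF assms] s t by simp
        also have "(u + v) + (s + t) *\<^sub>R a = (u + s *\<^sub>R a) + (v + t *\<^sub>R a)"
          by (simp add: algebra_simps)
        also have "q ((u + s *\<^sub>R a) + (v + t *\<^sub>R a)) \<le> q (u + s *\<^sub>R a) + q (v + t *\<^sub>R a)"
          by (rule sublin_add[OF assms])
        finally show "Rop q a (u + v) - (q (u + s *\<^sub>R a) - s * q a) \<le> q (v + t *\<^sub>R a) - t * q a"
          by (simp add: algebra_simps)
      qed
      then show "Rop q a (u + v) - Rop q a v \<le> q (u + s *\<^sub>R a) - s * q a" by simp
    qed
    then show ?thesis by simp
  qed
next
  fix c :: real and v assume c: "c > 0"
  have "Rop q a (c *\<^sub>R v) \<le> c * Rop q a v" by (rule Rop_scale_le[OF assms c])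
  moreover have "Rop q a ((1/c) *\<^sub>R (c *\<^sub>R v)) \<le> (1/c) * Rop q a (c *\<^sub>R v)"
    by (rule Rop_scale_le[OF assms]) (use c in simp)
  then have "c * Rop q a v \<le> Rop q a (c *\<^sub>R v)" using c by (simp add: field_simps)
  ultimately show "Rop q a (c *\<^sub>R v) = c * Rop q a v" by simp
qed

definition Mop :: "('v::real_vector \<Rightarrow> real) set \<Rightarrow> 'v \<Rightarrow> real" where
  "Mop C v = Inf ((\<lambda>q. q v) ` C)"

locale chainC =
  fixes C :: "('v::real_normed_vector \<Rightarrow> real) set"
  assumes ne: "C \<noteq> {}"
    and sl: "\<And>q. q \<in> C \<Longrightarrow> sublin q"
    and bn: "\<And>q v. q \<in> C \<Longrightarrow> q v \<le> norm v"
    and ch: "\<And>q1 q2. q1 \<in> C \<Longrightarrow> q2 \<in> C \<Longrightarrow> (\<forall>v. q1 v \<le> q2 v) \<or> (\<forall>v. q2 v \<le> q1 v)"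
begin

lemma lb: "q \<in> C \<Longrightarrow> - norm v \<le> q v"
  using sublin_neg[OF sl, of q v] bn[of q "-v"] by simp

lemma Mop_le: "q \<in> C \<Longrightarrow> Mop C v \<le> q v"
  unfolding Mop_def by (rule cInf_lower) (auto simp: bdd_below_def intro!: exI[of _ "- norm v"] lb)

lemma Mop_ge: "(\<And>q. q \<in> C \<Longrightarrow> c \<le> q v) \<Longrightarrow> c \<le> Mop C v"
  unfolding Mop_def by (rule cInf_greatest) (use ne in auto)

lemma Mop_scale_le: assumes "c > 0" shows "Mop C (c *\<^sub>R v) \<le> c * Mop C v"
proof -
  have "Mop C (c *\<^sub>R v) / c \<le> Mop C v"
  proof (rule Mop_ge)
    fix q assume q: "q \<in> C"
    have "Mop C (c *\<^sub>R v) \<le> c * q v" using Mop_le[OF q, of "c *\<^sub>R v"] sublin_pos[OF sl[OF q] assms, of v] by simp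
    then show "Mop C (c *\<^sub>R v) / c \<le> q v" using assms by (simp add: pos_divide_le_eq mult.commute)
  qed
  then show ?thesis using assms by (simp add: divide_le_eq mult.commute)
qed

lemma Mop_sublin: "sublin (Mop C)"
  unfolding sublin_def
proof (intro conjI allI impI)
  fix u v
  have "Mop C (u + v) - Mop C v \<le> Mop C u"
  proof (rule Mop_ge)
    fix q1 assume q1: "q1 \<in> C"
    have "Mop C (u + v) - q1 u \<le> Mop C v"
    proof (rule Mop_ge)
      fix q2 assume q2: "q2 \<in> C"
      show "Mop C (u + v) - q1 u \<le> q2 v"
      proof (cases "\<forall>w. q1 w \<le> q2 w")
        case True
        have "Mop C (u + v) \<le> q1 (u + v)" by (rule Mop_le[OF q1])
        also have "\<dots> \<le> q1 u + q1 v" by (rule sublin_add[OF sl[OF q1]])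
        finally show ?thesis using True[rule_format, of v] by linarith
      next
        case False
        then have le: "\<forall>w. q2 w \<le> q1 w" using ch[OF q1 q2] by blast
        have "Mop C (u + v) \<le> q2 (u + v)" by (rule Mop_le[OF q2])
        also have "\<dots> \<le> q2 u + q2 v" by (rule sublin_add[OF sl[OF q2]])
        finally show ?thesis using le[rule_format, of u] by linarith
      qed
    qed
    then show "Mop C (u + v) - Mop C v \<le> q1 u" by simp
  qed
  then show "Mop C (u + v) \<le> Mop C u + Mop C v" by simp
next
  fix c :: real and v assume c: "c > 0"
  have "Mop C (c *\<^sub>R v) \<le> c * Mop C v" by (rule Mop_scale_le[OF c])
  moreover have "Mop C ((1/c) *\<^sub>R (c *\<^sub>R v)) \<le> (1/c) * Mop C (c *\<^sub>R v)"
    by (rule Mop_scale_le) (use c in simp)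
  then have "c * Mop C v \<le> Mop C (c *\<^sub>R v)" using c by (simp add: field_simps)
  ultimately show "Mop C (c *\<^sub>R v) = c * Mop C v" by simp
qed

end

lemma hahn_banach_norm:
  fixes x :: "'v::real_normed_vector"
  shows "\<exists>f. linear f \<and> (\<forall>v. \<bar>f v\<bar> \<le> norm v) \<and> f x = norm x"
proof -
  define S where "S = {q :: 'v \<Rightarrow> real. sublin q \<and> (\<forall>v. q v \<le> norm v) \<and> q (- x) \<le> - norm x}"
  define P where "P = (\<lambda>q1 q2 :: 'v \<Rightarrow> real. \<forall>v. q2 v \<le> q1 v)"
  have q0: "Rop norm x \<in> S"
    unfolding S_def using Rop_sublin[OF sublin_norm] Rop_self[OF sublin_norm] Rop_neg[OF sublin_norm]
    by (auto intro: order_trans)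
  have po: "partial_order_on S (relation_of P S)"
    unfolding partial_order_on_def preorder_on_def refl_on_def trans_on_def antisym_on_def relation_of_def P_def
    by (auto intro: order_trans) (force intro: order_antisym simp: fun_eq_iff)
  have "\<exists>m \<in> S. \<forall>a \<in> S. P m a \<longrightarrow> a = m"
  proof (rule predicate_Zorn[OF po])
    fix C assume C: "C \<in> Chains (relation_of P S)"
    then have CS: "C \<subseteq> S" unfolding Chains_def relation_of_def by auto
    show "\<exists>u \<in> S. \<forall>a \<in> C. P a u"
    proof (cases "C = {}")
      case True then show ?thesis using q0 by auto
    next
      case False
      interpret chainC C
      proof
        show "C \<noteq> {}" by fact
        show "\<And>q. q \<in> C \<Longrightarrow> sublin q" using CS S_def by auto
        show "\<And>q v. q \<in> C \<Longrightarrow> q v \<le> norm v" using CS S_def by auto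
        show "\<And>q1 q2. q1 \<in> C \<Longrightarrow> q2 \<in> C \<Longrightarrow> (\<forall>v. q1 v \<le> q2 v) \<or> (\<forall>v. q2 v \<le> q1 v)"
          using C unfolding Chains_def relation_of_def P_def by blast
      qed
      have "Mop C \<in> S"
        unfolding S_def
      proof (intro CollectI conjI allI)
        show "sublin (Mop C)" by (rule Mop_sublin)
        obtain q where q: "q \<in> C" using False by blast
        show "Mop C v \<le> norm v" for v using Mop_le[OF q, of v] bn[OF q, of v] by simp
        show "Mop C (- x) \<le> - norm x" using Mop_le[OF q, of "-x"] CS q S_def by auto
      qed
      moreover have "\<forall>a \<in> C. P a (Mop C)" unfolding P_def using Mop_le by blast
      ultimately show ?thesis by blast
    qed
  qed
  then obtain m where mS: "m \<in> S" and mmin: "\<And>a. a \<in> S \<Longrightarrow> P m a \<Longrightarrow> a = m" by blast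
  have sm: "sublin m" using mS S_def by auto
  have odd: "m (- a) = - m a" for a
  proof -
    have "Rop m a \<in> S"
      unfolding S_def
    proof (intro CollectI conjI allI)
      show "sublin (Rop m a)" by (rule Rop_sublin[OF sm])
      show "Rop m a v \<le> norm v" for v
      proof -
        have "m v \<le> norm v" using mS S_def by blast
        then show ?thesis using Rop_self[OF sm, of a v] by linarith
      qed
      show "Rop m a (- x) \<le> - norm x"
      proof -
        have "m (- x) \<le> - norm x" using mS S_def by blast
        then show ?thesis using Rop_self[OF sm, of a "-x"] by linarith
      qed
    qed
    moreover have "P m (Rop m a)" unfolding P_def using Rop_self[OF sm] by blast
    ultimately have "Rop m a = m" using mmin by blast
    then have "m (- a) \<le> - m a" using Rop_neg[OF sm, of a] by simp
    then show ?thesis using sublin_neg[OF sm, of a] by simp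
  qed
  have add: "m (u + v) = m u + m v" for u v
  proof -
    have "m (- (u + v)) \<le> m (- u) + m (- v)" using sublin_add[OF sm, of "-u" "-v"] by simp
    then show ?thesis using sublin_add[OF sm, of u v] odd[of "u + v"] odd[of u] odd[of v] by linarith
  qed
  have scale: "m (c *\<^sub>R v) = c * m v" for c v
  proof (cases "c \<ge> 0")
    case True then show ?thesis using sublin_nonneg_scale[OF sm] by simp
  next
    case False
    then have "m ((- c) *\<^sub>R v) = (- c) * m v" by (intro sublin_nonneg_scale[OF sm]) simp
    then show ?thesis using odd[of "c *\<^sub>R v"] by simp
  qed
  have lin: "linear m" by (rule linearI) (use add scale in auto)
  have bd: "\<bar>m v\<bar> \<le> norm v" for v
    using mS S_def odd[of v] by (smt (verit) mem_Collect_eq norm_minus_cancel)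
  have "m x \<le> norm x" "m (- x) \<le> - norm x" using mS S_def by blast+
  then have "m x = norm x" using odd[of x] by linarith
  then show ?thesis using lin bd by blast
qed


lemma dn_le: assumes "N v0 \<le> 1" "\<And>v. N v \<le> 1 \<Longrightarrow> \<bar>f v\<bar> \<le> B" shows "dual_norm N f \<le> B"
  unfolding dual_norm_def by (rule cSup_least) (use assms in auto)

lemma dn_ge: assumes "\<And>v. N v \<le> 1 \<Longrightarrow> \<bar>f v\<bar> \<le> B" "N v \<le> 1" shows "\<bar>f v\<bar> \<le> dual_norm N f"
  unfolding dual_norm_def by (rule cSup_upper) (use assms in \<open>auto simp: bdd_above_def\<close>)

locale nrm =
  fixes N :: "'v::real_vector \<Rightarrow> real"
  assumes nn: "\<And>v. N v \<ge> 0"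
    and hom: "\<And>c v. N (c *\<^sub>R v) = \<bar>c\<bar> * N v"
    and pd: "\<And>v. N v = 0 \<Longrightarrow> v = 0"
begin

lemma N0: "N 0 = 0" using hom[of 0 0] by simp

lemma J_bound1: assumes "f \<in> supp_functionals N w" "N v \<le> 1" shows "\<bar>f v\<bar> \<le> 1"
proof -
  from assms(1) obtain K where K: "\<And>v. \<bar>f v\<bar> \<le> K * N v" and d: "dual_norm N f = 1"
    unfolding supp_functionals_def is_dual_functional_def by blast
  have B: "\<bar>f u\<bar> \<le> max K 0" if "N u \<le> 1" for u
  proof (cases "K \<ge> 0")
    case True
    then have "K * N u \<le> K * 1" using that by (intro mult_left_mono) auto
    then show ?thesis using K[of u] by simp
  next
    case False
    then have "K * N u \<le> 0" using nn[of u] by (simp add: mult_nonpos_nonneg)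
    then show ?thesis using K[of u] by simp
  qed
  show ?thesis using dn_ge[of N f "max K 0" v, OF B assms(2)] d by simp
qed

lemma J_bound: assumes "f \<in> supp_functionals N w" shows "\<bar>f v\<bar> \<le> N v"
proof -
  have lin: "linear f" using assms unfolding supp_functionals_def is_dual_functional_def by blast
  show ?thesis
  proof (cases "N v = 0")
    case True
    then have "v = 0" by (rule pd)
    then show ?thesis using linear_0[OF lin] True by simp
  next
    case False
    then have pos: "N v > 0" using nn[of v] by linarith
    have "N ((1 / N v) *\<^sub>R v) = \<bar>1 / N v\<bar> * N v" by (rule hom)
    also have "\<dots> = 1" using pos by simp
    finally have "\<bar>f ((1 / N v) *\<^sub>R v)\<bar> \<le> 1" using J_bound1[OF assms] by simp
    moreover have "f ((1 / N v) *\<^sub>R v) = f v / N v" using linear_cmul[OF lin, of "1 / N v" v] by simp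
    ultimately have "\<bar>f v\<bar> / N v \<le> 1" using pos by simp
    then show ?thesis using pos by (simp add: divide_le_eq)
  qed
qed

lemma J_intro: assumes lin: "linear f" and bd: "\<And>v. \<bar>f v\<bar> \<le> N v" and w: "w \<noteq> 0" and fw: "f w = N w"
  shows "f \<in> supp_functionals N w"
proof -
  have "N w \<noteq> 0" using pd w by blast
  then have pos: "N w > 0" using nn[of w] by linarith
  have "dual_norm N f \<le> 1"
  proof (rule dn_le[of N 0])
    show "N 0 \<le> 1" using N0 by simp
    show "\<bar>f v\<bar> \<le> 1" if "N v \<le> 1" for v using bd[of v] that by linarith
  qed
  moreover have "\<bar>f ((1 / N w) *\<^sub>R w)\<bar> \<le> dual_norm N f"
  proof (rule dn_ge[of N f 1])
    show "\<bar>f v\<bar> \<le> 1" if "N v \<le> 1" for v using bd[of v] that by linarith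
    have "N ((1 / N w) *\<^sub>R w) = \<bar>1 / N w\<bar> * N w" by (rule hom)
    also have "\<dots> = 1" using pos by simp
    finally show "N ((1 / N w) *\<^sub>R w) \<le> 1" by simp
  qed
  moreover have "f ((1 / N w) *\<^sub>R w) = 1" using linear_cmul[OF lin, of "1 / N w" w] pos fw by simp
  ultimately have "dual_norm N f = 1" by simp
  moreover have "is_dual_functional N f" unfolding is_dual_functional_def
  proof (intro conjI exI[of _ 1] allI)
    show "linear f" by fact
    show "\<bar>f v\<bar> \<le> 1 * N v" for v using bd[of v] by simp
  qed
  ultimately show ?thesis unfolding supp_functionals_def using fw by blast
qed

end




lemma nrm_norm: "nrm (norm :: 'v::real_normed_vector \<Rightarrow> real)"
  by unfold_locales auto

lemma nrm_inf: "nrm (inf_sum_norm :: 'a::real_normed_vector \<times> 'b::real_normed_vector \<Rightarrow> real)"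
proof
  fix v :: "'a \<times> 'b"
  show "0 \<le> inf_sum_norm v" unfolding inf_sum_norm_def by (simp add: le_max_iff_disj)
  show "inf_sum_norm v = 0 \<Longrightarrow> v = 0" unfolding inf_sum_norm_def
    by (cases v) (simp add: max_def zero_prod_def split: if_splits)
next
  fix c :: real and v :: "'a \<times> 'b"
  show "inf_sum_norm (c *\<^sub>R v) = \<bar>c\<bar> * inf_sum_norm v" unfolding inf_sum_norm_def
    by (cases v) (simp add: max_mult_distrib_left)
qed



lemma part1:
  fixes x :: "'a::real_normed_vector" and y :: "'b::real_normed_vector"
  assumes lt: "norm y < norm x" and sm: "delta_smooth norm e x"
  shows "delta_smooth inf_sum_norm e (x, y)"
proof -
  have Nxy: "inf_sum_norm (x,y) = norm x" unfolding inf_sum_norm_def using lt by simp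
  have xne: "x \<noteq> 0" using lt norm_ge_zero[of y] by auto
  have red: "(\<forall>u w. f (u,w) = f (u,0)) \<and> (\<lambda>u. f (u,0)) \<in> supp_functionals norm x"
    if fJ: "f \<in> supp_functionals inf_sum_norm (x,y)" for f
  proof -
    have lin: "linear f" and fxy: "f (x,y) = norm x"
      using fJ Nxy unfolding supp_functionals_def is_dual_functional_def by auto
    have bd: "\<bar>f p\<bar> \<le> inf_sum_norm p" for p by (rule nrm.J_bound[OF nrm_inf fJ])
    have z: "f (0, w) = 0" for w
    proof (rule ccontr)
      assume ne: "f (0,w) \<noteq> 0"
      then have "w \<noteq> 0" using linear_0[OF lin] by (auto simp: zero_prod_def)
      then have nw: "norm w > 0" by simp
      define d where "d = norm x - norm y"
      have dpos: "d > 0" using lt d_def by simp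
      define s where "s = sgn (f (0,w)) * d / norm w"
      define w2 where "w2 = s *\<^sub>R w"
      have "(0, w2) = s *\<^sub>R (0, w)" unfolding w2_def by simp
      then have f2: "f (0, w2) = s * f (0,w)" using linear_cmul[OF lin, of s "(0,w)"] by simp
      have "s * f (0,w) = \<bar>f (0,w)\<bar> * d / norm w" unfolding s_def
        by (cases "f (0,w) > 0") (auto simp: sgn_if)
      then have pos2: "f (0,w2) > 0" using ne dpos nw f2 by simp
      have "\<bar>s\<bar> = d / norm w" unfolding s_def using ne dpos nw by (simp add: abs_mult sgn_if)
      then have nw2: "norm w2 = d" unfolding w2_def using nw by simp
      have "norm (y + w2) \<le> norm x" using norm_triangle_ineq[of y w2] nw2 d_def by simp
      then have N2: "inf_sum_norm (x, y + w2) = norm x" unfolding inf_sum_norm_def by simp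
      have "(x, y + w2) = (x,y) + (0, w2)" by simp
      then have "f (x, y + w2) = norm x + f (0, w2)" using linear_add[OF lin, of "(x,y)" "(0,w2)"] fxy by simp
      then show False using bd[of "(x, y+w2)"] N2 pos2 by simp
    qed
    have split: "f (u,w) = f (u,0)" for u w
    proof -
      have "(u,w) = (u,0) + (0,w)" by simp
      then have "f (u,w) = f (u,0) + f (0,w)" using linear_add[OF lin, of "(u,0)" "(0,w)"] by simp
      then show ?thesis using z by simp
    qed
    have lin1: "linear (\<lambda>u. f (u,0))"
    proof (rule linearI)
      fix a b :: 'a
      have "(a + b, 0::'b) = (a,0) + (b,0)" by simp
      then show "f (a + b, 0) = f (a, 0) + f (b, 0)" using linear_add[OF lin, of "(a,0)" "(b,0)"] by simp
    next
      fix c :: real and a :: 'a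
      have "(c *\<^sub>R a, 0::'b) = c *\<^sub>R (a,0)" by simp
      then show "f (c *\<^sub>R a, 0) = c *\<^sub>R f (a, 0)" using linear_cmul[OF lin, of c "(a,0)"] by simp
    qed
    have bd1: "\<bar>f (u,0)\<bar> \<le> norm u" for u
      using bd[of "(u,0)"] unfolding inf_sum_norm_def by simp
    have "f (x,0) = norm x" using split[of x y] fxy by simp
    then have "(\<lambda>u. f (u,0)) \<in> supp_functionals norm x"
      by (intro nrm.J_intro[OF nrm_norm lin1 bd1 xne])
    then show ?thesis using split by blast
  qed
  show ?thesis unfolding delta_smooth_def
  proof (intro conjI ballI)
    show "(x, y) \<noteq> 0" using xne by (simp add: zero_prod_def)
  next
    fix f g assume fJ: "f \<in> supp_functionals inf_sum_norm (x,y)" and gJ: "g \<in> supp_functionals inf_sum_norm (x,y)"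
    note rf = red[OF fJ] and rg = red[OF gJ]
    have all: "\<forall>f\<in>supp_functionals norm x. \<forall>g\<in>supp_functionals norm x. dual_norm norm (\<lambda>v. f v - g v) \<le> e"
      using sm unfolding delta_smooth_def by blast
    have ex: "dual_norm norm (\<lambda>u. f (u,0) - g (u,0)) \<le> e"
      using bspec[OF bspec[OF all conjunct2[OF rf]] conjunct2[OF rg]] by simp
    have b1: "\<bar>f (u,0) - g (u,0)\<bar> \<le> 2" if "norm u \<le> 1" for u
      using nrm.J_bound[OF nrm_norm conjunct2[OF rf], of u] nrm.J_bound[OF nrm_norm conjunct2[OF rg], of u] that
      by linarith
    show "dual_norm inf_sum_norm (\<lambda>v. f v - g v) \<le> e"
    proof (rule dn_le[of inf_sum_norm 0])
      show "inf_sum_norm (0::'a \<times> 'b) \<le> 1" unfolding inf_sum_norm_def by simp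
    next
      fix p :: "'a \<times> 'b" assume p: "inf_sum_norm p \<le> 1"
      obtain u w where pu: "p = (u,w)" by (cases p)
      have "norm u \<le> 1" using p pu unfolding inf_sum_norm_def by simp
      then have "\<bar>f (u,0) - g (u,0)\<bar> \<le> dual_norm norm (\<lambda>u. f (u,0) - g (u,0))"
        using dn_ge[of norm "\<lambda>u. f (u,0) - g (u,0)" 2 u] b1 by blast
      moreover have "f p = f (u,0)" "g p = g (u,0)" using rf rg pu by blast+
      ultimately show "\<bar>f p - g p\<bar> \<le> e" using ex by simp
    qed
  qed
qed

lemma part2:
  fixes x :: "'a::real_normed_vector" and y :: "'b::real_normed_vector"
  assumes lt: "norm x < norm y" and sm: "delta_smooth norm e y"
  shows "delta_smooth inf_sum_norm e (x, y)"
proof -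
  have Nxy: "inf_sum_norm (x,y) = norm y" unfolding inf_sum_norm_def using lt by simp
  have yne: "y \<noteq> 0" using lt norm_ge_zero[of x] by auto
  have red: "(\<forall>u w. f (u,w) = f (0,w)) \<and> (\<lambda>w. f (0,w)) \<in> supp_functionals norm y"
    if fJ: "f \<in> supp_functionals inf_sum_norm (x,y)" for f
  proof -
    have lin: "linear f" and fxy: "f (x,y) = norm y"
      using fJ Nxy unfolding supp_functionals_def is_dual_functional_def by auto
    have bd: "\<bar>f p\<bar> \<le> inf_sum_norm p" for p by (rule nrm.J_bound[OF nrm_inf fJ])
    have z: "f (u, 0) = 0" for u
    proof (rule ccontr)
      assume ne: "f (u,0) \<noteq> 0"
      then have "u \<noteq> 0" using linear_0[OF lin] by (auto simp: zero_prod_def)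
      then have nu: "norm u > 0" by simp
      define d where "d = norm y - norm x"
      have dpos: "d > 0" using lt d_def by simp
      define s where "s = sgn (f (u,0)) * d / norm u"
      define u2 where "u2 = s *\<^sub>R u"
      have "(u2, 0) = s *\<^sub>R (u, 0)" unfolding u2_def by simp
      then have f2: "f (u2, 0) = s * f (u,0)" using linear_cmul[OF lin, of s "(u,0)"] by simp
      have "s * f (u,0) = \<bar>f (u,0)\<bar> * d / norm u" unfolding s_def
        by (cases "f (u,0) > 0") (auto simp: sgn_if)
      then have pos2: "f (u2,0) > 0" using ne dpos nu f2 by simp
      have "\<bar>s\<bar> = d / norm u" unfolding s_def using ne dpos nu by (simp add: abs_mult sgn_if)
      then have nu2: "norm u2 = d" unfolding u2_def using nu by simp
      have "norm (x + u2) \<le> norm y" using norm_triangle_ineq[of x u2] nu2 d_def by simp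
      then have N2: "inf_sum_norm (x + u2, y) = norm y" unfolding inf_sum_norm_def by simp
      have "(x + u2, y) = (x,y) + (u2, 0)" by simp
      then have "f (x + u2, y) = norm y + f (u2, 0)" using linear_add[OF lin, of "(x,y)" "(u2,0)"] fxy by simp
      then show False using bd[of "(x + u2, y)"] N2 pos2 by simp
    qed
    have split: "f (u,w) = f (0,w)" for u w
    proof -
      have "(u,w) = (u,0) + (0,w)" by simp
      then have "f (u,w) = f (u,0) + f (0,w)" using linear_add[OF lin, of "(u,0)" "(0,w)"] by simp
      then show ?thesis using z by simp
    qed
    have lin1: "linear (\<lambda>w. f (0,w))"
    proof (rule linearI)
      fix a b :: 'b
      have "(0::'a, a + b) = (0,a) + (0,b)" by simp
      then show "f (0, a + b) = f (0, a) + f (0, b)" using linear_add[OF lin, of "(0,a)" "(0,b)"] by simp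
    next
      fix c :: real and a :: 'b
      have "(0::'a, c *\<^sub>R a) = c *\<^sub>R (0,a)" by simp
      then show "f (0, c *\<^sub>R a) = c *\<^sub>R f (0, a)" using linear_cmul[OF lin, of c "(0,a)"] by simp
    qed
    have bd1: "\<bar>f (0,w)\<bar> \<le> norm w" for w
      using bd[of "(0,w)"] unfolding inf_sum_norm_def by simp
    have "f (0,y) = norm y" using split[of x y] fxy by simp
    then have "(\<lambda>w. f (0,w)) \<in> supp_functionals norm y"
      by (intro nrm.J_intro[OF nrm_norm lin1 bd1 yne])
    then show ?thesis using split by blast
  qed
  show ?thesis unfolding delta_smooth_def
  proof (intro conjI ballI)
    show "(x, y) \<noteq> 0" using yne by (simp add: zero_prod_def)
  next
    fix f g assume fJ: "f \<in> supp_functionals inf_sum_norm (x,y)" and gJ: "g \<in> supp_functionals inf_sum_norm (x,y)"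
    note rf = red[OF fJ] and rg = red[OF gJ]
    have all: "\<forall>f\<in>supp_functionals norm y. \<forall>g\<in>supp_functionals norm y. dual_norm norm (\<lambda>v. f v - g v) \<le> e"
      using sm unfolding delta_smooth_def by blast
    have ex: "dual_norm norm (\<lambda>w. f (0,w) - g (0,w)) \<le> e"
      using bspec[OF bspec[OF all conjunct2[OF rf]] conjunct2[OF rg]] by simp
    have b1: "\<bar>f (0,w) - g (0,w)\<bar> \<le> 2" if "norm w \<le> 1" for w
      using nrm.J_bound[OF nrm_norm conjunct2[OF rf], of w] nrm.J_bound[OF nrm_norm conjunct2[OF rg], of w] that
      by linarith
    show "dual_norm inf_sum_norm (\<lambda>v. f v - g v) \<le> e"
    proof (rule dn_le[of inf_sum_norm 0])
      show "inf_sum_norm (0::'a \<times> 'b) \<le> 1" unfolding inf_sum_norm_def by simp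
    next
      fix p :: "'a \<times> 'b" assume p: "inf_sum_norm p \<le> 1"
      obtain u w where pu: "p = (u,w)" by (cases p)
      have "norm w \<le> 1" using p pu unfolding inf_sum_norm_def by simp
      then have "\<bar>f (0,w) - g (0,w)\<bar> \<le> dual_norm norm (\<lambda>w. f (0,w) - g (0,w))"
        using dn_ge[of norm "\<lambda>w. f (0,w) - g (0,w)" 2 w] b1 by blast
      moreover have "f p = f (0,w)" "g p = g (0,w)" using rf rg pu by blast+
      ultimately show "\<bar>f p - g p\<bar> \<le> e" using ex by simp
    qed
  qed
qed

lemma part3:
  fixes x :: "'a::real_normed_vector" and y :: "'b::real_normed_vector"
  assumes nz: "(x, y) \<noteq> 0" and eq: "norm x = norm y" and e: "e < 2"
  shows "\<not> delta_smooth inf_sum_norm e (x, y)"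
proof
  assume sm: "delta_smooth inf_sum_norm e (x, y)"
  have xne: "x \<noteq> 0" and yne: "y \<noteq> 0" using nz eq by (auto simp: zero_prod_def)
  then have nx: "norm x > 0" and ny: "norm y > 0" by auto
  have Nxy: "inf_sum_norm (x,y) = norm x" unfolding inf_sum_norm_def using eq by simp
  obtain \<phi> where lp: "linear \<phi>" and bp: "\<And>v. \<bar>\<phi> v\<bar> \<le> norm v" and px: "\<phi> x = norm x"
    using hahn_banach_norm[of x] by blast
  obtain \<psi> where lq: "linear \<psi>" and bq: "\<And>v. \<bar>\<psi> v\<bar> \<le> norm v" and qy: "\<psi> y = norm y"
    using hahn_banach_norm[of y] by blast
  define f where "f = (\<lambda>p::'a \<times> 'b. \<phi> (fst p))"
  define g where "g = (\<lambda>p::'a \<times> 'b. \<psi> (snd p))"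
  have linf: "linear f" unfolding f_def
    by (rule linearI) (simp_all add: linear_add[OF lp] linear_cmul[OF lp])
  have ling: "linear g" unfolding g_def
    by (rule linearI) (simp_all add: linear_add[OF lq] linear_cmul[OF lq])
  have bf: "\<bar>f p\<bar> \<le> inf_sum_norm p" for p
    unfolding f_def inf_sum_norm_def using bp[of "fst p"] by linarith
  have bg: "\<bar>g p\<bar> \<le> inf_sum_norm p" for p
    unfolding g_def inf_sum_norm_def using bq[of "snd p"] by linarith
  have fJ: "f \<in> supp_functionals inf_sum_norm (x,y)"
    by (rule nrm.J_intro[OF nrm_inf linf bf nz]) (simp add: f_def px Nxy)
  have gJ: "g \<in> supp_functionals inf_sum_norm (x,y)"
    by (rule nrm.J_intro[OF nrm_inf ling bg nz]) (simp add: g_def qy Nxy eq)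
  have le: "dual_norm inf_sum_norm (\<lambda>v. f v - g v) \<le> e"
    using sm fJ gJ unfolding delta_smooth_def by blast
  define p where "p = ((1 / norm x) *\<^sub>R x, - ((1 / norm y) *\<^sub>R y))"
  have Np: "inf_sum_norm p \<le> 1" unfolding p_def inf_sum_norm_def using nx ny by simp
  have "f p = 1" unfolding f_def p_def using linear_cmul[OF lp, of "1 / norm x" x] px nx by simp
  moreover have "g p = -1" unfolding g_def p_def
    using linear_cmul[OF lq, of "- (1 / norm y)" y] qy ny by simp
  ultimately have "\<bar>f p - g p\<bar> = 2" by simp
  moreover have "\<bar>f p - g p\<bar> \<le> dual_norm inf_sum_norm (\<lambda>v. f v - g v)"
  proof (rule dn_ge[of inf_sum_norm "\<lambda>v. f v - g v" 2 p])
    show "\<bar>f v - g v\<bar> \<le> 2" if "inf_sum_norm v \<le> 1" for v using bf[of v] bg[of v] that by linarith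
    show "inf_sum_norm p \<le> 1" by (rule Np)
  qed
  ultimately show False using le e by simp
qed

theorem theorem6p5:
  fixes x :: "'a::real_normed_vector" and y :: "'b::real_normed_vector"
    and \<epsilon>x \<epsilon>y :: real
  assumes "(x, y) \<noteq> 0"
  shows "(norm x > norm y \<and> 0 \<le> \<epsilon>x \<and> \<epsilon>x < 2 \<and> delta_smooth norm \<epsilon>x x
            \<longrightarrow> delta_smooth inf_sum_norm \<epsilon>x (x, y))
       \<and> (norm x < norm y \<and> 0 \<le> \<epsilon>y \<and> \<epsilon>y < 2 \<and> delta_smooth norm \<epsilon>y y
            \<longrightarrow> delta_smooth inf_sum_norm \<epsilon>y (x, y))
       \<and> (norm x = norm y \<longrightarrow>
            (\<forall>\<epsilon>. 0 \<le> \<epsilon> \<and> \<epsilon> < 2 \<longrightarrow> \<not> delta_smooth inf_sum_norm \<epsilon> (x, y)))"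
  using part1[of y x \<epsilon>x] part2[of x y \<epsilon>y] part3[OF assms] by blast


end
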